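(* Let $\mu\in\mathbb{C}$ with $\mu\notin\frac12\mathbb{Z}$ or $\mu\in\mathbb{Z}$, and let $\varphi$ be a $\frac12$-derivation of $\widetilde{L_{1,\mu}}^1$. Then there exist $\lambda_1\in\mathbb{C}$ and two families of complex numbers $\{\alpha_t\}_{t\in\mathbb{Z}}$, $\{\beta_t\}_{t\in\mathbb{Z}}$ such that for all $m\in\mathbb{Z}$: $\varphi(L_m)=\lambda_1L_m+\sum_{t\in\mathbb{Z}}\alpha_tM_{m+t}+\sum_{t\in\mathbb{Z}}\beta_tY_{m+t+\frac12}$, $\varphi(Y_{m+\frac12})=\lambda_1Y_{m+\frac12}+\sum_{t\in\mathbb{Z}}\beta_tM_{m+t+1}$, $\varphi(M_m)=\lambda_1M_m$, $\varphi(C_L)=\lambda_1C_L$.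
   Context: For $\mu\in\mathbb{C}$, $\widetilde{L_{1,\mu}}^1$ is the complex Lie algebra with basis $\{L_n,M_n,Y_{n+\frac12},C_L\mid n\in\mathbb{Z}\}$, $C_L$ central, and nonzero brackets $[L_m,L_n]=(n-m)L_{m+n}+\frac{m^3-m}{12}\delta_{m+n,0}C_L$, $[L_m,M_n]=(n-m+2\mu)M_{m+n}$, $[L_m,Y_{n+\frac12}]=(n+\frac12-m+\mu)Y_{m+n+\frac12}$, $[Y_{m+\frac12},Y_{n+\frac12}]=(n-m)M_{m+n+1}$. A $\frac12$-derivation is a linear map $\varphi$ with $\varphi([x,y])=\frac12([\varphi(x),y]+[x,\varphi(y)])$ for all $x,y$. The sums are understood as elements of the algebra (finitely many nonzero terms). *)

theory Defs
  imports Complex_Main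
begin

text \<open>Basis of the Lie algebra: L n = L_n, M n = M_n, Y n = Y_{n+1/2}, C = C_L.\<close>
datatype bas = L int | M int | Y int | C

text \<open>Algebra elements: finitely supported coefficient functions on the basis.\<close>
definition fin :: "(bas \<Rightarrow> complex) \<Rightarrow> bool" where
  "fin f \<longleftrightarrow> finite {b. f b \<noteq> 0}"

definition supp :: "(bas \<Rightarrow> complex) \<Rightarrow> bas set" where
  "supp f = {b. f b \<noteq> 0}"

definition e :: "bas \<Rightarrow> bas \<Rightarrow> complex" where
  "e b = (\<lambda>x. if x = b then 1 else 0)"

definition vadd :: "(bas \<Rightarrow> complex) \<Rightarrow> (bas \<Rightarrow> complex) \<Rightarrow> bas \<Rightarrow> complex" where
  "vadd f g = (\<lambda>x. f x + g x)"

definition vsmul :: "complex \<Rightarrow> (bas \<Rightarrow> complex) \<Rightarrow> bas \<Rightarrow> complex" where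
  "vsmul c f = (\<lambda>x. c * f x)"

fun br :: "complex \<Rightarrow> bas \<Rightarrow> bas \<Rightarrow> bas \<Rightarrow> complex" where
  "br \<mu> (L m) (L n) = vadd (vsmul (of_int (n - m)) (e (L (m + n))))
        (vsmul (if m + n = 0 then of_int (m^3 - m) / 12 else 0) (e C))"
| "br \<mu> (L m) (M n) = vsmul (of_int (n - m) + 2 * \<mu>) (e (M (m + n)))"
| "br \<mu> (M n) (L m) = vsmul (- (of_int (n - m) + 2 * \<mu>)) (e (M (m + n)))"
| "br \<mu> (L m) (Y n) = vsmul (of_int n + 1/2 - of_int m + \<mu>) (e (Y (m + n)))"
| "br \<mu> (Y n) (L m) = vsmul (- (of_int n + 1/2 - of_int m + \<mu>)) (e (Y (m + n)))"
| "br \<mu> (Y m) (Y n) = vsmul (of_int (n - m)) (e (M (m + n + 1)))"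
| "br \<mu> _ _ = (\<lambda>_. 0)"

definition bracket :: "complex \<Rightarrow> (bas \<Rightarrow> complex) \<Rightarrow> (bas \<Rightarrow> complex) \<Rightarrow> bas \<Rightarrow> complex" where
  "bracket \<mu> x y = (\<lambda>z. \<Sum>a\<in>supp x. \<Sum>b\<in>supp y. x a * y b * br \<mu> a b z)"

definition half_derivation :: "complex \<Rightarrow> ((bas \<Rightarrow> complex) \<Rightarrow> (bas \<Rightarrow> complex)) \<Rightarrow> bool" where
  "half_derivation \<mu> \<phi> \<longleftrightarrow>
     (\<forall>x. fin x \<longrightarrow> fin (\<phi> x)) \<and>
     (\<forall>x y. fin x \<longrightarrow> fin y \<longrightarrow> \<phi> (vadd x y) = vadd (\<phi> x) (\<phi> y)) \<and>
     (\<forall>c x. fin x \<longrightarrow> \<phi> (vsmul c x) = vsmul c (\<phi> x)) \<and>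
     (\<forall>x y. fin x \<longrightarrow> fin y \<longrightarrow>
        \<phi> (bracket \<mu> x y) = vsmul (1/2) (vadd (bracket \<mu> (\<phi> x) y) (bracket \<mu> x (\<phi> y))))"

end

theory Submission
  imports Defs
begin

lemma fin_e: "fin (e b)"
  unfolding fin_def e_def by (rule finite_subset[of _ "{b}"]) auto

lemma supp_e: "supp (e b) = {b}"
  by (auto simp: supp_def e_def)

lemma bracket_ee: "bracket \<mu> (e a) (e b) = br \<mu> a b"
  by (rule ext) (simp add: bracket_def supp_e, simp add: e_def)

lemma bracket_xe: "bracket \<mu> x (e b) z = (\<Sum>a\<in>supp x. x a * br \<mu> a b z)"
  by (simp add: bracket_def supp_e, simp add: e_def)

lemma bracket_ex: "bracket \<mu> (e a) y z = (\<Sum>b\<in>supp y. y b * br \<mu> a b z)"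
  by (simp add: bracket_def supp_e, simp add: e_def)

lemma hd_fin: "half_derivation \<mu> \<phi> \<Longrightarrow> fin x \<Longrightarrow> fin (\<phi> x)"
  by (simp add: half_derivation_def)

lemma master:
  assumes "half_derivation \<mu> \<phi>"
  shows "\<phi> (br \<mu> a b) z = 1/2 * ((\<Sum>a'\<in>supp (\<phi> (e a)). \<phi> (e a) a' * br \<mu> a' b z)
            + (\<Sum>b'\<in>supp (\<phi> (e b)). \<phi> (e b) b' * br \<mu> a b' z))"
proof -
  have "\<phi> (bracket \<mu> (e a) (e b)) = vsmul (1/2) (vadd (bracket \<mu> (\<phi> (e a)) (e b)) (bracket \<mu> (e a) (\<phi> (e b))))"
    using assms fin_e unfolding half_derivation_def by blast
  then have "\<phi> (bracket \<mu> (e a) (e b)) z = vsmul (1/2) (vadd (bracket \<mu> (\<phi> (e a)) (e b)) (bracket \<mu> (e a) (\<phi> (e b)))) z"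
    by simp
  then show ?thesis by (simp add: bracket_ee bracket_xe bracket_ex vsmul_def vadd_def)
qed

lemma fin_vsmul_e: "fin (vsmul c (e b))"
  unfolding fin_def vsmul_def e_def by (rule finite_subset[of _ "{b}"]) auto

lemma phi_sm:
  assumes "half_derivation \<mu> \<phi>"
  shows "\<phi> (vsmul c (e b)) z = c * \<phi> (e b) z"
proof -
  have "\<phi> (vsmul c (e b)) = vsmul c (\<phi> (e b))"
    using assms fin_e unfolding half_derivation_def by blast
  then show ?thesis by (simp add: vsmul_def)
qed

lemma phi_lin2:
  assumes "half_derivation \<mu> \<phi>"
  shows "\<phi> (vadd (vsmul c1 (e b1)) (vsmul c2 (e b2))) z = c1 * \<phi> (e b1) z + c2 * \<phi> (e b2) z"
proof -
  have "\<phi> (vadd (vsmul c1 (e b1)) (vsmul c2 (e b2))) = vadd (\<phi> (vsmul c1 (e b1))) (\<phi> (vsmul c2 (e b2)))"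
    using assms fin_vsmul_e unfolding half_derivation_def by blast
  then show ?thesis using phi_sm[OF assms] by (simp add: vadd_def)
qed

lemma phi_zero:
  assumes "half_derivation \<mu> \<phi>"
  shows "\<phi> (\<lambda>_. 0) z = 0"
proof -
  have "(\<lambda>_. 0) = vsmul 0 (e C)" by (simp add: vsmul_def)
  then show ?thesis using phi_sm[OF assms, of 0 C z] by simp
qed

lemma sum_one:
  assumes "fin f" "\<And>a. a \<noteq> a0 \<Longrightarrow> g a = 0"
  shows "(\<Sum>a\<in>supp f. f a * g a) = f a0 * g a0"
proof (cases "a0 \<in> supp f")
  case True
  have fs: "finite (supp f)" using assms(1) by (simp add: fin_def supp_def)
  have "(\<Sum>a\<in>supp f. f a * g a) = f a0 * g a0 + (\<Sum>a\<in>supp f - {a0}. f a * g a)"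
    using sum.remove[OF fs True] by simp
  also have "(\<Sum>a\<in>supp f - {a0}. f a * g a) = 0" using assms(2) by (intro sum.neutral) auto
  finally show ?thesis by simp
next
  case False
  then have "f a0 = 0" by (simp add: supp_def)
  moreover have "(\<Sum>a\<in>supp f. f a * g a) = 0"
  proof (intro sum.neutral ballI)
    fix x assume "x \<in> supp f"
    with False have "x \<noteq> a0" by auto
    then show "f x * g x = 0" using assms(2) by simp
  qed
  ultimately show ?thesis by simp
qed

lemma br_anti: "br \<mu> a b z = - br \<mu> b a z"
proof (cases a)
  case (L m) note a = this
  show ?thesis
  proof (cases b)
    case (L n)
    show ?thesis
    proof (cases "m + n = 0")
      case True
      then have "n = -m" by simp
      then show ?thesis using a L by (auto simp: vadd_def vsmul_def e_def algebra_simps diff_divide_distrib)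
    next
      case False
      then show ?thesis using a L by (auto simp: vadd_def vsmul_def e_def algebra_simps)
    qed
  qed (auto simp: a vadd_def vsmul_def e_def algebra_simps)
qed (cases b; auto simp: vadd_def vsmul_def e_def algebra_simps)+

fun cf :: "complex \<Rightarrow> int \<Rightarrow> bas \<Rightarrow> complex" where
  "cf \<mu> m (L k) = of_int (k - m - m)"
| "cf \<mu> m (M k) = of_int (k - m - m) + 2 * \<mu>"
| "cf \<mu> m (Y k) = of_int (k - m) + 1/2 - of_int m + \<mu>"
| "cf \<mu> m C = of_int (m^3 - m) / 12"

fun pre :: "int \<Rightarrow> bas \<Rightarrow> bas" where
  "pre m (L k) = L (k - m)"
| "pre m (M k) = M (k - m)"
| "pre m (Y k) = Y (k - m)"
| "pre m C = L (- m)"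

lemma sum_Lm:
  assumes "fin f"
  shows "(\<Sum>b\<in>supp f. f b * br \<mu> (L m) b z) = cf \<mu> m z * f (pre m z)"
proof -
  have "(\<Sum>b\<in>supp f. f b * br \<mu> (L m) b z) = f (pre m z) * br \<mu> (L m) (pre m z) z"
  proof (rule sum_one[OF assms])
    fix b assume "b \<noteq> pre m z" then show "br \<mu> (L m) b z = 0"
      by (cases z; cases b) (auto simp: vadd_def vsmul_def e_def)
  qed
  also have "br \<mu> (L m) (pre m z) z = cf \<mu> m z"
    by (cases z) (auto simp: vadd_def vsmul_def e_def)
  finally show ?thesis by simp
qed

lemma br_Mz: "br \<mu> (M n) b (L k) = 0" "br \<mu> (M n) b (Y k) = 0" "br \<mu> (M n) b C = 0"
  by (cases b; simp add: vsmul_def e_def)+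

lemma br_Yz: "br \<mu> (Y n) b (L k) = 0" "br \<mu> (Y n) b C = 0"
  by (cases b; simp add: vsmul_def e_def)+

lemma sum_Mn:
  assumes "fin f"
  shows "(\<Sum>b\<in>supp f. f b * br \<mu> (M n) b z) =
     (case z of M k \<Rightarrow> - (of_int (n - (k - n)) + 2 * \<mu>) * f (L (k - n)) | _ \<Rightarrow> 0)"
proof (cases z)
  case (M k)
  have "(\<Sum>b\<in>supp f. f b * br \<mu> (M n) b z) = f (L (k - n)) * br \<mu> (M n) (L (k - n)) z"
  proof (rule sum_one[OF assms])
    fix b assume "b \<noteq> L (k - n)" then show "br \<mu> (M n) b z = 0"
      using M by (cases b) (auto simp: vadd_def vsmul_def e_def)
  qed
  then show ?thesis using M by (simp add: vsmul_def e_def)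
qed (simp_all add: br_Mz br_Yz)

lemma sum_Yn:
  assumes "fin f"
  shows "(\<Sum>b\<in>supp f. f b * br \<mu> (Y n) b z) =
     (case z of Y k \<Rightarrow> - (of_int n + 1/2 - of_int (k - n) + \<mu>) * f (L (k - n))
        | M k \<Rightarrow> of_int (k - n - 1 - n) * f (Y (k - n - 1)) | _ \<Rightarrow> 0)"
proof (cases z)
  case (M k)
  have "(\<Sum>b\<in>supp f. f b * br \<mu> (Y n) b z) = f (Y (k - n - 1)) * br \<mu> (Y n) (Y (k - n - 1)) z"
  proof (rule sum_one[OF assms])
    fix b assume "b \<noteq> Y (k - n - 1)" then show "br \<mu> (Y n) b z = 0"
      using M by (cases b) (auto simp: vadd_def vsmul_def e_def)
  qed
  then show ?thesis using M by (simp add: vsmul_def e_def)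
next
  case (Y k)
  have "(\<Sum>b\<in>supp f. f b * br \<mu> (Y n) b z) = f (L (k - n)) * br \<mu> (Y n) (L (k - n)) z"
  proof (rule sum_one[OF assms])
    fix b assume "b \<noteq> L (k - n)" then show "br \<mu> (Y n) b z = 0"
      using Y by (cases b) (auto simp: vadd_def vsmul_def e_def)
  qed
  then show ?thesis using Y by (simp add: vsmul_def e_def)
qed (simp_all add: br_Mz br_Yz)


context
  fixes \<mu> :: complex and \<phi> :: "(bas \<Rightarrow> complex) \<Rightarrow> (bas \<Rightarrow> complex)"
  assumes hd: "half_derivation \<mu> \<phi>"
begin

lemma finphi: "fin (\<phi> (e b))" using hd_fin[OF hd fin_e] .

lemma first_sum:
  "(\<Sum>a'\<in>supp (\<phi> (e a)). \<phi> (e a) a' * br \<mu> a' b z) = - (\<Sum>a'\<in>supp (\<phi> (e a)). \<phi> (e a) a' * br \<mu> b a' z)"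
proof -
  have "(\<Sum>a'\<in>supp (\<phi> (e a)). \<phi> (e a) a' * br \<mu> a' b z) = (\<Sum>a'\<in>supp (\<phi> (e a)). - (\<phi> (e a) a' * br \<mu> b a' z))"
    by (rule sum.cong[OF refl]) (subst br_anti, simp)
  then show ?thesis by (simp add: sum_negf)
qed

lemma eqLL:
  assumes "N = m + n"
  shows "of_int (n - m) * \<phi> (e (L N)) z + (if m + n = 0 then of_int (m^3 - m) / 12 else 0) * \<phi> (e C) z
     = 1/2 * (- (cf \<mu> n z * \<phi> (e (L m)) (pre n z)) + cf \<mu> m z * \<phi> (e (L n)) (pre m z))"
  using master[OF hd, of "L m" "L n" z] assms
  by (simp add: phi_lin2[OF hd] first_sum sum_Lm[OF finphi])

lemma eqC: "cf \<mu> n z * \<phi> (e C) (pre n z) = 0"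
proof -
  have "br \<mu> C (L n) = (\<lambda>_. 0)" by simp
  have "br \<mu> C b' z = 0" for b' by simp
  then show ?thesis using master[OF hd, of C "L n" z]
    by (simp add: phi_zero[OF hd] first_sum sum_Lm[OF finphi])
qed

lemma eqLM:
  assumes "N = m + n"
  shows "(of_int (n - m) + 2 * \<mu>) * \<phi> (e (M N)) z
     = 1/2 * (- (case z of M k \<Rightarrow> - (of_int (n - (k - n)) + 2 * \<mu>) * \<phi> (e (L m)) (L (k - n)) | _ \<Rightarrow> 0)
              + cf \<mu> m z * \<phi> (e (M n)) (pre m z))"
  using master[OF hd, of "L m" "M n" z] assms
  by (simp add: phi_sm[OF hd] first_sum sum_Lm[OF finphi] sum_Mn[OF finphi])

lemma eqLY:
  assumes "N = m + n"
  shows "(of_int n + 1/2 - of_int m + \<mu>) * \<phi> (e (Y N)) z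
     = 1/2 * (- (case z of Y k \<Rightarrow> - (of_int n + 1/2 - of_int (k - n) + \<mu>) * \<phi> (e (L m)) (L (k - n))
        | M k \<Rightarrow> of_int (k - n - 1 - n) * \<phi> (e (L m)) (Y (k - n - 1)) | _ \<Rightarrow> 0)
              + cf \<mu> m z * \<phi> (e (Y n)) (pre m z))"
  using master[OF hd, of "L m" "Y n" z] assms
  by (simp add: phi_sm[OF hd] first_sum sum_Lm[OF finphi] sum_Yn[OF finphi])

end


fun wt :: "complex \<Rightarrow> bas \<Rightarrow> complex" where
  "wt \<mu> (L k) = of_int k"
| "wt \<mu> (M k) = of_int k + 2 * \<mu>"
| "wt \<mu> (Y k) = of_int k + 1/2 + \<mu>"
| "wt \<mu> C = 0"

lemma cf0: "cf \<mu> 0 z = wt \<mu> z" by (cases z) simp_all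
lemma cf_pre0: "cf \<mu> 0 z * f (pre 0 z) = wt \<mu> z * f z" by (cases z) simp_all
lemma wtpre: "wt \<mu> (pre m z) = wt \<mu> z - of_int m" by (cases z) (simp_all add: of_int_diff)

lemma weight_kill:
  fixes r :: "int \<Rightarrow> bas \<Rightarrow> complex" and \<omega> :: complex
  assumes eq: "\<And>m n z. (of_int n - of_int m + \<omega>) * r (m + n) z = 1/2 * (cf \<mu> m z * r n (pre m z))"
    and nz: "of_int N - 2 + \<omega> \<noteq> 0 \<or> of_int N + 2 + \<omega> \<noteq> 0"
  shows "r N z = 0"
proof -
  have e0: "(of_int n + \<omega>) * r n z = 1/2 * (wt \<mu> z * r n z)" for n z
    using eq[of n 0 z] by (simp add: cf_pre0)
  obtain m :: int where m0: "m \<noteq> 0" and nzm: "of_int (N - m) - of_int m + \<omega> \<noteq> 0"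
  proof (cases "of_int N - 2 + \<omega> \<noteq> 0")
    case True
    then show ?thesis using that[of 1] by (simp add: algebra_simps)
  next
    case False
    then have "of_int N + 2 + \<omega> \<noteq> 0" using nz by simp
    then show ?thesis using that[of "-1"] by (simp add: algebra_simps)
  qed
  have e1: "(of_int (N - m) - of_int m + \<omega>) * r N z = 1/2 * (cf \<mu> m z * r (N - m) (pre m z))"
    using eq[of "N - m" m z] by simp
  have e2: "(of_int (N - m) + \<omega>) * r (N - m) (pre m z) = 1/2 * ((wt \<mu> z - of_int m) * r (N - m) (pre m z))"
    using e0[of "N - m" "pre m z"] by (simp add: wtpre)
  show ?thesis
  proof (rule ccontr)
    assume h: "r N z \<noteq> 0"
    have "(of_int N + \<omega> - 1/2 * wt \<mu> z) * r N z = 0"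
      using e0[of N z] by (simp add: algebra_simps)
    with h have w: "of_int N + \<omega> - 1/2 * wt \<mu> z = 0" by simp
    have "(of_int (N - m) + \<omega> - 1/2 * (wt \<mu> z - of_int m)) * r (N - m) (pre m z) = 0"
      using e2 by (simp add: field_simps)
    moreover have fac: "of_int (N - m) + \<omega> - 1/2 * (wt \<mu> z - of_int m) = - of_int m / 2"
      using w by (simp add: algebra_simps)
    ultimately have "(- of_int m / 2) * r (N - m) (pre m z) = 0" by (simp only: fac)
    then have "r (N - m) (pre m z) = 0" using m0 by simp
    then have "(of_int (N - m) - of_int m + \<omega>) * r N z = 0" using e1 by simp
    with nzm h show False by simp
  qed
qed

lemma hmu_lemma:
  fixes \<mu> :: complex
  assumes "(\<forall>k::int. \<mu> \<noteq> of_int k / 2) \<or> \<mu> \<in> \<int>"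
  shows "of_int j + 1/2 + \<mu> \<noteq> 0"
proof
  assume h: "of_int j + 1/2 + \<mu> = 0"
  then have mu: "\<mu> = of_int (-2*j - 1) / 2" by (simp add: field_simps) (simp add: algebra_simps eq_neg_iff_add_eq_0)
  from assms show False
  proof
    assume "\<forall>k::int. \<mu> \<noteq> of_int k / 2" with mu show False by blast
  next
    assume "\<mu> \<in> \<int>" then obtain i where i: "\<mu> = of_int i" by (auto elim: Ints_cases)
    with mu have "(of_int (2*i) :: complex) = of_int (-2*j-1)" by (simp add: field_simps)
    then have "2*i = -2*j-1" by (simp only: of_int_eq_iff)
    then show False by presburger
  qed
qed


lemma e_val: "e b z = (if z = b then 1 else 0)" by (simp add: e_def)

lemma cancel_fac: "(c::complex) \<noteq> 0 \<Longrightarrow> c * (x - y) = 0 \<Longrightarrow> x = y" by simp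

lemma of_int_nz: "(k::int) \<noteq> 0 \<Longrightarrow> (of_int k :: complex) \<noteq> 0" by simp

context
  fixes \<mu> :: complex and \<phi> :: "(bas \<Rightarrow> complex) \<Rightarrow> (bas \<Rightarrow> complex)"
  assumes hd: "half_derivation \<mu> \<phi>"
    and hmu: "\<And>j::int. of_int j + 1/2 + \<mu> \<noteq> 0"
begin

lemma phiC_zero: "z \<noteq> C \<Longrightarrow> \<phi> (e C) z = 0"
proof (cases z)
  case (L j)
  have "cf \<mu> (j+1) (L (2*j+1)) * \<phi> (e C) (pre (j+1) (L (2*j+1))) = 0" by (rule eqC[OF hd])
  then show ?thesis using L by simp
next
  case (M j)
  show ?thesis
  proof (cases "\<mu> = 0")
    case True
    have "cf \<mu> (j+1) (M (2*j+1)) * \<phi> (e C) (pre (j+1) (M (2*j+1))) = 0" by (rule eqC[OF hd])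
    then show ?thesis using M True by simp
  next
    case False
    have "cf \<mu> j (M (2*j)) * \<phi> (e C) (pre j (M (2*j))) = 0" by (rule eqC[OF hd])
    then show ?thesis using M False by simp
  qed
next
  case (Y j)
  have "cf \<mu> 0 (Y j) * \<phi> (e C) (pre 0 (Y j)) = 0" by (rule eqC[OF hd])
  then show ?thesis using Y hmu[of j] by simp
qed simp

lemma aL_reg: "k \<noteq> 2*m \<Longrightarrow> \<phi> (e (L m)) (L k) = \<phi> (e (L 0)) (L (k - m))"
proof -
  assume k: "k \<noteq> 2*m"
  have "of_int (0 - m) * \<phi> (e (L m)) (L k) + (if m + 0 = 0 then of_int (m^3 - m) / 12 else 0) * \<phi> (e C) (L k)
     = 1/2 * (- (cf \<mu> 0 (L k) * \<phi> (e (L m)) (pre 0 (L k))) + cf \<mu> m (L k) * \<phi> (e (L 0)) (pre m (L k)))"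
    by (rule eqLL[OF hd]) simp
  then have p: "(of_int (k - 2*m)) * (\<phi> (e (L m)) (L k) - \<phi> (e (L 0)) (L (k - m))) = 0"
    by (simp add: phiC_zero field_simps)
  have nz: "(of_int (k - 2*m) :: complex) \<noteq> 0" by (rule of_int_nz) (use k in simp)
  show ?thesis by (rule cancel_fac[OF nz p])
qed

lemma A_zero: "t \<noteq> 0 \<Longrightarrow> \<phi> (e (L 0)) (L t) = 0"
proof -
  assume t: "t \<noteq> 0"
  define s where "s = - t"
  have s0: "s \<noteq> 0" using t by (simp add: s_def)
  define X where "X = \<phi> (e (L 0)) (L t)"
  define D where "D = \<phi> (e (L s)) C"
  define S where "S = (of_int s :: complex)"
  have S0: "S \<noteq> 0" using s0 by (simp add: S_def)
  have eq1: "of_int (s - 0) * \<phi> (e (L s)) C + (if 0 + s = 0 then of_int (0^3 - 0) / 12 else 0) * \<phi> (e C) C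
     = 1/2 * (- (cf \<mu> s C * \<phi> (e (L 0)) (pre s C)) + cf \<mu> 0 C * \<phi> (e (L s)) (pre 0 C))"
    by (rule eqLL[OF hd]) simp
  have eq2: "of_int (-2*s - 3*s) * \<phi> (e (L s)) C + (if 3*s + -2*s = 0 then of_int ((3*s)^3 - 3*s) / 12 else 0) * \<phi> (e C) C
     = 1/2 * (- (cf \<mu> (-2*s) C * \<phi> (e (L (3*s))) (pre (-2*s) C)) + cf \<mu> (3*s) C * \<phi> (e (L (-2*s))) (pre (3*s) C))"
    by (rule eqLL[OF hd]) simp
  have r1: "\<phi> (e (L (3*s))) (L (2*s)) = X" using aL_reg[of "2*s" "3*s"] s0 by (simp add: X_def s_def)
  have r2: "\<phi> (e (L (-2*s))) (L (-3*s)) = X" using aL_reg[of "-3*s" "-2*s"] s0 by (simp add: X_def s_def)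
  have e1: "S * D = - (1/2) * ((S^3 - S) / 12) * X"
    using eq1 s0 by (simp add: S_def D_def X_def s_def of_int_power)
  have e2: "- 5 * S * D = 1/2 * (- (((-2*S)^3 + 2*S) / 12) * X + (((3*S)^3 - 3*S) / 12) * X)"
    using eq2 s0 r1 r2 by (simp add: S_def D_def of_int_power algebra_simps)
  have "30 * S^3 * X = 0" using e1 e2 by algebra
  with S0 show ?thesis by (simp add: X_def)
qed

lemma A2m: "m \<noteq> 0 \<Longrightarrow> \<phi> (e (L m)) (L (2*m)) = 0"
proof -
  assume m0: "m \<noteq> 0"
  have eq: "of_int (3*m - m) * \<phi> (e (L (4*m))) (L (5*m)) + (if m + 3*m = 0 then of_int (m^3 - m) / 12 else 0) * \<phi> (e C) (L (5*m))
     = 1/2 * (- (cf \<mu> (3*m) (L (5*m)) * \<phi> (e (L m)) (pre (3*m) (L (5*m)))) + cf \<mu> m (L (5*m)) * \<phi> (e (L (3*m))) (pre m (L (5*m))))"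
    by (rule eqLL[OF hd]) simp
  have r1: "\<phi> (e (L (4*m))) (L (5*m)) = 0" using aL_reg[of "5*m" "4*m"] A_zero[of m] m0 by simp
  have r2: "\<phi> (e (L (3*m))) (L (4*m)) = 0" using aL_reg[of "4*m" "3*m"] A_zero[of m] m0 by simp
  have "of_int m * \<phi> (e (L m)) (L (2*m)) = 0" using eq r1 r2 by (simp add: phiC_zero)
  then show ?thesis using m0 by simp
qed

definition "lamv = \<phi> (e (L 0)) (L 0)"

lemma L1: "\<phi> (e (L m)) (L k) = (if k = m then lamv else 0)"
proof (cases "k = 2*m")
  case True
  show ?thesis
  proof (cases "m = 0")
    case True then show ?thesis using \<open>k = 2*m\<close> by (simp add: lamv_def)
  next
    case False then show ?thesis using \<open>k = 2*m\<close> A2m by simp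
  qed
next
  case False
  then show ?thesis using aL_reg[OF False] A_zero[of "k - m"] by (simp add: lamv_def)
qed

lemma L4: "\<phi> (e (L m)) C = 0"
proof (cases "m = 0")
  case True
  have eq: "of_int (-1 - 1::int) * \<phi> (e (L 0)) C + (if (1::int) + -1 = 0 then of_int ((1::int)^3 - 1) / 12 else 0) * \<phi> (e C) C
     = 1/2 * (- (cf \<mu> (-1) C * \<phi> (e (L 1)) (pre (-1) C)) + cf \<mu> 1 C * \<phi> (e (L (-1))) (pre 1 C))"
    by (rule eqLL[OF hd]) simp
  then show ?thesis using True by simp
next
  case False
  have eq1: "of_int (m - 0) * \<phi> (e (L m)) C + (if 0 + m = 0 then of_int (0^3 - 0) / 12 else 0) * \<phi> (e C) C
     = 1/2 * (- (cf \<mu> m C * \<phi> (e (L 0)) (pre m C)) + cf \<mu> 0 C * \<phi> (e (L m)) (pre 0 C))"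
    by (rule eqLL[OF hd]) simp
  then show ?thesis using False A_zero[of "-m"] by simp
qed

lemma CC: "\<phi> (e C) C = lamv"
proof -
  have eq: "of_int (-2 - 2::int) * \<phi> (e (L 0)) C + (if (2::int) + -2 = 0 then of_int ((2::int)^3 - 2) / 12 else 0) * \<phi> (e C) C
     = 1/2 * (- (cf \<mu> (-2) C * \<phi> (e (L 2)) (pre (-2) C)) + cf \<mu> 2 C * \<phi> (e (L (-2))) (pre 2 C))"
    by (rule eqLL[OF hd]) simp
  then show ?thesis using L4[of 0] L1[of 2 2] L1[of "-2" "-2"] by simp
qed

lemma aM_reg: "of_int (k - m - m) + 2*\<mu> \<noteq> 0 \<Longrightarrow> \<phi> (e (L m)) (M k) = \<phi> (e (L 0)) (M (k - m))"
proof -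
  assume nz: "of_int (k - m - m) + 2*\<mu> \<noteq> 0"
  have "of_int (0 - m) * \<phi> (e (L m)) (M k) + (if m + 0 = 0 then of_int (m^3 - m) / 12 else 0) * \<phi> (e C) (M k)
     = 1/2 * (- (cf \<mu> 0 (M k) * \<phi> (e (L m)) (pre 0 (M k))) + cf \<mu> m (M k) * \<phi> (e (L 0)) (pre m (M k)))"
    by (rule eqLL[OF hd]) simp
  then have p: "(of_int (k - m - m) + 2*\<mu>) * (\<phi> (e (L m)) (M k) - \<phi> (e (L 0)) (M (k - m))) = 0"
    by (simp add: phiC_zero field_simps)
  show ?thesis by (rule cancel_fac[OF nz p])
qed

lemma L2: "\<phi> (e (L m)) (M k) = \<phi> (e (L 0)) (M (k - m))"
proof (cases "of_int (k - m - m) + 2*\<mu> = 0")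
  case False then show ?thesis by (rule aM_reg)
next
  case h: True
  show ?thesis
  proof (cases "m = 0")
    case True then show ?thesis by simp
  next
    case m0: False
    define B where "B = \<phi> (e (L 0)) (M (k - m))"
    have eq: "of_int (3*m - m) * \<phi> (e (L (4*m))) (M (k+3*m)) + (if m + 3*m = 0 then of_int (m^3 - m) / 12 else 0) * \<phi> (e C) (M (k+3*m))
     = 1/2 * (- (cf \<mu> (3*m) (M (k+3*m)) * \<phi> (e (L m)) (pre (3*m) (M (k+3*m)))) + cf \<mu> m (M (k+3*m)) * \<phi> (e (L (3*m))) (pre m (M (k+3*m))))"
      by (rule eqLL[OF hd]) simp
    have x1: "of_int (k+3*m-4*m-4*m) + 2*\<mu> = of_int (-3*m) + (of_int (k - m - m) + 2*\<mu>)"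
      by (simp add: algebra_simps)
    have x2: "of_int (k+2*m-3*m-3*m) + 2*\<mu> = of_int (-2*m) + (of_int (k - m - m) + 2*\<mu>)"
      by (simp add: algebra_simps)
    have n1: "of_int (k+3*m-4*m-4*m) + 2*\<mu> \<noteq> 0"
    proof -
      have eqv: "of_int (k+3*m-4*m-4*m) + 2*\<mu> = of_int (-3*m)" unfolding x1 h by simp
      show ?thesis unfolding eqv using m0 by simp
    qed
    have n2: "of_int (k+2*m-3*m-3*m) + 2*\<mu> \<noteq> 0"
    proof -
      have eqv: "of_int (k+2*m-3*m-3*m) + 2*\<mu> = of_int (-2*m)" unfolding x2 h by simp
      show ?thesis unfolding eqv using m0 by simp
    qed
    have r1: "\<phi> (e (L (4*m))) (M (k+3*m)) = B"
      using aM_reg[OF n1] by (simp add: B_def)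
    have r2: "\<phi> (e (L (3*m))) (M (k+2*m)) = B"
      using aM_reg[OF n2] by (simp add: B_def)
    have c1: "cf \<mu> (3*m) (M (k+3*m)) = - of_int m"
    proof -
      have eqv: "cf \<mu> (3*m) (M (k+3*m)) = of_int (-m) + (of_int (k - m - m) + 2*\<mu>)" by (simp add: algebra_simps)
      show ?thesis unfolding eqv h by simp
    qed
    have c2: "cf \<mu> m (M (k+3*m)) = 3 * of_int m"
    proof -
      have eqv: "cf \<mu> m (M (k+3*m)) = of_int (3*m) + (of_int (k - m - m) + 2*\<mu>)" by (simp add: algebra_simps)
      show ?thesis unfolding eqv h by simp
    qed
    have p3: "pre (3*m) (M (k+3*m)) = M k" by simp
    have p4: "pre m (M (k+3*m)) = M (k + 2*m)" by simp
    have "of_int (2*m) * B = 1/2 * (of_int m * \<phi> (e (L m)) (M k) + 3 * of_int m * B)"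
      using eq unfolding c1 c2 p3 p4 r1 r2 by (simp add: phiC_zero)
    then have "of_int m * (\<phi> (e (L m)) (M k) - B) = 0" by (simp add: field_simps) (metis)
    then show ?thesis using m0 by (simp add: B_def)
  qed
qed

lemma L3: "\<phi> (e (L m)) (Y k) = \<phi> (e (L 0)) (Y (k - m))"
proof -
  have "of_int (0 - m) * \<phi> (e (L m)) (Y k) + (if m + 0 = 0 then of_int (m^3 - m) / 12 else 0) * \<phi> (e C) (Y k)
     = 1/2 * (- (cf \<mu> 0 (Y k) * \<phi> (e (L m)) (pre 0 (Y k))) + cf \<mu> m (Y k) * \<phi> (e (L 0)) (pre m (Y k)))"
    by (rule eqLL[OF hd]) simp
  then have p: "(of_int (k - m - m) + 1/2 + \<mu>) * (\<phi> (e (L m)) (Y k) - \<phi> (e (L 0)) (Y (k - m))) = 0"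
    by (simp add: phiC_zero) algebra
  show ?thesis by (rule cancel_fac[OF hmu p])
qed

lemma MM: "\<phi> (e (M N)) z = lamv * e (M N) z"
proof -
  define r where "r = (\<lambda>n z. \<phi> (e (M n)) z - lamv * e (M n) z)"
  have eq: "(of_int n - of_int m + 2*\<mu>) * r (m + n) z = 1/2 * (cf \<mu> m z * r n (pre m z))" for m n z
  proof -
    have E: "(of_int (n - m) + 2 * \<mu>) * \<phi> (e (M (m + n))) z
     = 1/2 * (- (case z of M k \<Rightarrow> - (of_int (n - (k - n)) + 2 * \<mu>) * \<phi> (e (L m)) (L (k - n)) | _ \<Rightarrow> 0)
              + cf \<mu> m z * \<phi> (e (M n)) (pre m z))"
      by (rule eqLM[OF hd]) simp
    show ?thesis
    proof (cases z)
      case (M k)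
      show ?thesis
      proof (cases "k = m + n")
        case True
        have h2: "(1/2::complex) * 2 = 1" by simp
        show ?thesis using E[unfolded M True] unfolding M True by (simp add: r_def e_val L1 del: mult_cancel_left mult_cancel_right) (insert h2, algebra)
      next
        case False
        then show ?thesis using E M by (auto simp: r_def e_val L1 algebra_simps)
      qed
    qed (use E in \<open>auto simp: r_def e_val\<close>)
  qed
  have nz: "of_int N - 2 + 2*\<mu> \<noteq> 0 \<or> of_int N + 2 + 2*\<mu> \<noteq> 0"
  proof (rule ccontr)
    assume "\<not> ?thesis"
    then have "of_int N - 2 + 2*\<mu> = 0" "of_int N + 2 + 2*\<mu> = 0" by auto
    then have "(of_int N + 2 + 2*\<mu>) - (of_int N - 2 + 2*\<mu>) = 0" by simp
    then show False by simp
  qed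
  have "r N z = 0" by (rule weight_kill[of "2*\<mu>" r, OF eq nz])
  then show ?thesis by (simp add: r_def)
qed

definition "EY n z = (case z of Y k \<Rightarrow> if k = n then lamv else 0 | M k \<Rightarrow> \<phi> (e (L 0)) (Y (k - n - 1)) | _ \<Rightarrow> 0)"

lemma YY: "\<phi> (e (Y N)) z = EY N z"
proof -
  define r where "r = (\<lambda>n z. \<phi> (e (Y n)) z - EY n z)"
  have eq: "(of_int n - of_int m + (1/2 + \<mu>)) * r (m + n) z = 1/2 * (cf \<mu> m z * r n (pre m z))" for m n z
  proof -
    have E: "(of_int n + 1/2 - of_int m + \<mu>) * \<phi> (e (Y (m + n))) z
     = 1/2 * (- (case z of Y k \<Rightarrow> - (of_int n + 1/2 - of_int (k - n) + \<mu>) * \<phi> (e (L m)) (L (k - n))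
        | M k \<Rightarrow> of_int (k - n - 1 - n) * \<phi> (e (L m)) (Y (k - n - 1)) | _ \<Rightarrow> 0)
              + cf \<mu> m z * \<phi> (e (Y n)) (pre m z))"
      by (rule eqLY[OF hd]) simp
    have cc: "(of_int n - of_int m + (1/2 + \<mu>)) = (of_int n + 1/2 - of_int m + \<mu>)" by (simp add: algebra_simps)
    show ?thesis
    proof (cases z)
      case (Y k)
      show ?thesis
      proof (cases "k = m + n")
        case True
        have h2: "(1/2::complex) * 2 = 1" by simp
        show ?thesis using E[unfolded Y True] unfolding Y True by (simp add: r_def EY_def L1 del: mult_cancel_left mult_cancel_right) (insert h2, algebra)
      next
        case False
        then show ?thesis using E Y by (auto simp: r_def EY_def L1 algebra_simps)
      qed
    next
      case (M k)
      define B where "B = \<phi> (e (L 0)) (Y (k - m - n - 1))"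
      have b1: "\<phi> (e (L m)) (Y (k - n - 1)) = B"
      proof -
        show ?thesis unfolding B_def L3[of m "k - n - 1"]
          by (rule arg_cong[where f="\<lambda>x. \<phi> (e (L 0)) (Y x)"]) simp
      qed
      have b2: "EY (m + n) (M k) = B"
      proof -
        show ?thesis unfolding B_def EY_def bas.case
          by (rule arg_cong[where f="\<lambda>x. \<phi> (e (L 0)) (Y x)"]) simp
      qed
      have b3: "EY n (M (k - m)) = B" by (simp add: EY_def B_def)
      have E1: "(of_int n + 1/2 - of_int m + \<mu>) * \<phi> (e (Y (m + n))) (M k)
          = 1/2 * (- (of_int (k - n - 1 - n) * B) + (of_int (k - m - m) + 2 * \<mu>) * \<phi> (e (Y n)) (M (k - m)))"
        using E unfolding M by (simp only: bas.case cf.simps pre.simps b1)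
      have h2: "(1/2::complex) * 2 = 1" by simp
      show ?thesis unfolding r_def M pre.simps cf.simps b2 b3 using E1 h2
        by (simp only: of_int_diff of_int_add of_int_mult of_int_1) algebra
    qed (use E in \<open>unfold cc, auto simp: r_def EY_def\<close>)
  qed
  have nz: "of_int N - 2 + (1/2 + \<mu>) \<noteq> 0 \<or> of_int N + 2 + (1/2 + \<mu>) \<noteq> 0"
    using hmu[of "N - 2"] by (simp add: algebra_simps)
  have "r N z = 0" by (rule weight_kill[of "1/2 + \<mu>" r, OF eq nz])
  then show ?thesis by (simp add: r_def)
qed

end


lemma sum_pick:
  assumes "finite {t. f t \<noteq> 0}" and "\<And>t. P t \<longleftrightarrow> t = t0"
  shows "(\<Sum>t\<in>{t. f t \<noteq> 0}. f t * (if P t then 1 else 0)) = (f t0 :: complex)"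
proof -
  have "(\<Sum>t\<in>{t. f t \<noteq> 0}. f t * (if P t then 1 else 0)) = (\<Sum>t\<in>{t. f t \<noteq> 0}. if t = t0 then f t else 0)"
    by (rule sum.cong[OF refl]) (simp add: assms(2))
  also have "\<dots> = f t0" using assms(1) by (subst sum.delta) auto
  finally show ?thesis .
qed

theorem mainTheorem7:
  fixes \<mu> :: complex and \<phi> :: "(bas \<Rightarrow> complex) \<Rightarrow> (bas \<Rightarrow> complex)"
  assumes "(\<forall>k::int. \<mu> \<noteq> of_int k / 2) \<or> \<mu> \<in> \<int>"
    and "half_derivation \<mu> \<phi>"
  shows "\<exists>lam1 (\<alpha>::int \<Rightarrow> complex) (\<beta>::int \<Rightarrow> complex).
           finite {t. \<alpha> t \<noteq> 0} \<and> finite {t. \<beta> t \<noteq> 0} \<and>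
           (\<forall>m::int.
              \<phi> (e (L m)) = (\<lambda>z. lam1 * e (L m) z
                   + (\<Sum>t\<in>{t. \<alpha> t \<noteq> 0}. \<alpha> t * e (M (m + t)) z)
                   + (\<Sum>t\<in>{t. \<beta> t \<noteq> 0}. \<beta> t * e (Y (m + t)) z)) \<and>
              \<phi> (e (Y m)) = (\<lambda>z. lam1 * e (Y m) z
                   + (\<Sum>t\<in>{t. \<beta> t \<noteq> 0}. \<beta> t * e (M (m + t + 1)) z)) \<and>
              \<phi> (e (M m)) = vsmul lam1 (e (M m))) \<and>
           \<phi> (e C) = vsmul lam1 (e C)"
proof -
  have hd: "half_derivation \<mu> \<phi>" by (rule assms(2))
  have hmu: "\<And>j::int. of_int j + 1/2 + \<mu> \<noteq> 0" by (rule hmu_lemma[OF assms(1)])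
  define lam where "lam = \<phi> (e (L 0)) (L 0)"
  define \<alpha> where "\<alpha> = (\<lambda>t. \<phi> (e (L 0)) (M t))"
  define \<beta> where "\<beta> = (\<lambda>t. \<phi> (e (L 0)) (Y t))"
  have lv: "lamv \<phi> = lam" by (simp add: lamv_def[OF hd hmu] lam_def)
  have fin0: "finite {b. \<phi> (e (L 0)) b \<noteq> 0}" using finphi[OF hd] by (simp add: fin_def)
  have fa: "finite {t. \<alpha> t \<noteq> 0}"
  proof -
    have "{t. \<alpha> t \<noteq> 0} = M -` {b. \<phi> (e (L 0)) b \<noteq> 0}" by (auto simp: \<alpha>_def)
    moreover have "finite (M -` {b. \<phi> (e (L 0)) b \<noteq> 0})"
      by (rule finite_vimageI[OF fin0]) (simp add: inj_def)
    ultimately show ?thesis by simp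
  qed
  have fb: "finite {t. \<beta> t \<noteq> 0}"
  proof -
    have "{t. \<beta> t \<noteq> 0} = Y -` {b. \<phi> (e (L 0)) b \<noteq> 0}" by (auto simp: \<beta>_def)
    moreover have "finite (Y -` {b. \<phi> (e (L 0)) b \<noteq> 0})"
      by (rule finite_vimageI[OF fin0]) (simp add: inj_def)
    ultimately show ?thesis by simp
  qed
  have PL: "\<phi> (e (L m)) = (\<lambda>z. lam * e (L m) z
                   + (\<Sum>t\<in>{t. \<alpha> t \<noteq> 0}. \<alpha> t * e (M (m + t)) z)
                   + (\<Sum>t\<in>{t. \<beta> t \<noteq> 0}. \<beta> t * e (Y (m + t)) z))" for m
  proof (rule ext)
    fix z show "\<phi> (e (L m)) z = lam * e (L m) z
                   + (\<Sum>t\<in>{t. \<alpha> t \<noteq> 0}. \<alpha> t * e (M (m + t)) z)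
                   + (\<Sum>t\<in>{t. \<beta> t \<noteq> 0}. \<beta> t * e (Y (m + t)) z)"
    proof (cases z)
      case (L k) then show ?thesis using L1[OF hd hmu, of m k] by (simp add: e_val lv)
    next
      case (M k)
      have "(\<Sum>t\<in>{t. \<alpha> t \<noteq> 0}. \<alpha> t * e (M (m + t)) z) = \<alpha> (k - m)"
        unfolding M e_val by (simp only: bas.inject) (rule sum_pick[OF fa], auto)
      then show ?thesis using M L2[OF hd hmu, of m k] by (simp add: e_val \<alpha>_def)
    next
      case (Y k)
      have "(\<Sum>t\<in>{t. \<beta> t \<noteq> 0}. \<beta> t * e (Y (m + t)) z) = \<beta> (k - m)"
        unfolding Y e_val by (simp only: bas.inject) (rule sum_pick[OF fb], auto)
      then show ?thesis using Y L3[OF hd hmu, of m k] by (simp add: e_val \<beta>_def)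
    next
      case C then show ?thesis using L4[OF hd hmu, of m] by (simp add: e_val)
    qed
  qed
  have PY: "\<phi> (e (Y m)) = (\<lambda>z. lam * e (Y m) z
                   + (\<Sum>t\<in>{t. \<beta> t \<noteq> 0}. \<beta> t * e (M (m + t + 1)) z))" for m
  proof (rule ext)
    fix z show "\<phi> (e (Y m)) z = lam * e (Y m) z
                   + (\<Sum>t\<in>{t. \<beta> t \<noteq> 0}. \<beta> t * e (M (m + t + 1)) z)"
    proof (cases z)
      case (M k)
      have "(\<Sum>t\<in>{t. \<beta> t \<noteq> 0}. \<beta> t * e (M (m + t + 1)) z) = \<beta> (k - m - 1)"
        unfolding M e_val by (simp only: bas.inject) (rule sum_pick[OF fb], auto)
      then show ?thesis using M YY[OF hd hmu, of m z] by (simp add: e_val EY_def[OF hd hmu] \<beta>_def)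
    qed (use YY[OF hd hmu, of m z] in \<open>auto simp: e_val EY_def[OF hd hmu] lv\<close>)
  qed
  have PM: "\<phi> (e (M m)) = vsmul lam (e (M m))" for m
    using MM[OF hd hmu, of m] by (auto simp: vsmul_def lv)
  have PC: "\<phi> (e C) = vsmul lam (e C)"
  proof (rule ext)
    fix z show "\<phi> (e C) z = vsmul lam (e C) z"
      using CC[OF hd hmu] phiC_zero[OF hd hmu, of z] by (cases "z = C") (auto simp: vsmul_def e_val lv)
  qed
  show ?thesis using fa fb PL PY PM PC by blast
qed

end
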